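(* Let $a\geq 1$ and $n,p>1$ be integers and let $G$ be a regular graph. Then $apG\circ nK_1$ is distance magic if and only if $aH_{n,p}\otimes G$ is distance magic.
   Context: A graph $G$ on $v$ vertices is distance magic if there is a bijection $f:V(G)\to\{1,\ldots,v\}$ and a constant $k$ such that for every vertex $x$, $\sum_{y\in N(x)}f(y)=k$, where $N(x)$ is the set of neighbours of $x$. $H_{n,p}$ denotes the complete multipartite graph with $p$ partite sets each of size $n$; $cH$ denotes the disjoint union of $c$ copies of $H$; $nK_1$ is the edgeless graph on $n$ vertices. The lexicographic product $G\circ H$ has vertex set $V(G)\times V(H)$, with $(g,h)\sim(g',h')$ iff $gg'\in E(G)$, or $g=g'$ and $hh'\in E(H)$. The Kronecker (tensor) product $G\otimes H$ has vertex set $V(G)\times V(H)$, with $(g,h)\sim(g',h')$ iff $gg'\in E(G)$ and $hh'\in E(H)$. *)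

theory Defs
  imports Main
begin

type_synonym 'a graph = "'a set \<times> ('a \<Rightarrow> 'a \<Rightarrow> bool)"

definition verts :: "'a graph \<Rightarrow> 'a set" where "verts G = fst G"
definition adj :: "'a graph \<Rightarrow> 'a \<Rightarrow> 'a \<Rightarrow> bool" where "adj G = snd G"

definition nbhd :: "'a graph \<Rightarrow> 'a \<Rightarrow> 'a set" where
  "nbhd G x = {y \<in> verts G. adj G x y}"

definition simple_graph :: "'a graph \<Rightarrow> bool" where
  "simple_graph G \<longleftrightarrow> finite (verts G) \<and>
     (\<forall>x\<in>verts G. \<forall>y\<in>verts G. adj G x y \<longrightarrow> adj G y x) \<and>
     (\<forall>x\<in>verts G. \<not> adj G x x)"

definition regular :: "'a graph \<Rightarrow> bool" where
  "regular G \<longleftrightarrow> (\<exists>d. \<forall>x\<in>verts G. card (nbhd G x) = d)"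

definition distance_magic :: "'a graph \<Rightarrow> bool" where
  "distance_magic G \<longleftrightarrow> (\<exists>f :: 'a \<Rightarrow> nat. \<exists>k.
     bij_betw f (verts G) {1..card (verts G)} \<and>
     (\<forall>x\<in>verts G. (\<Sum>y\<in>nbhd G x. f y) = k))"

definition copies :: "nat \<Rightarrow> 'a graph \<Rightarrow> (nat \<times> 'a) graph" where
  "copies c G = ({0..<c} \<times> verts G, \<lambda>(i,x) (j,y). i = j \<and> adj G x y)"

definition empty_graph :: "nat \<Rightarrow> nat graph" where
  "empty_graph n = ({0..<n}, \<lambda>_ _. False)"

text \<open>$H_{n,p}$: complete multipartite graph with $p$ parts of size $n$.\<close>
definition complete_multipartite :: "nat \<Rightarrow> nat \<Rightarrow> (nat \<times> nat) graph" where
  "complete_multipartite n p = ({0..<p} \<times> {0..<n}, \<lambda>(i,u) (j,v). i \<noteq> j)"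

definition lex_prod :: "'a graph \<Rightarrow> 'b graph \<Rightarrow> ('a \<times> 'b) graph" where
  "lex_prod G H = (verts G \<times> verts H,
     \<lambda>(g,h) (g',h'). adj G g g' \<or> (g = g' \<and> adj H h h'))"

definition tensor_prod :: "'a graph \<Rightarrow> 'b graph \<Rightarrow> ('a \<times> 'b) graph" where
  "tensor_prod G H = (verts G \<times> verts H,
     \<lambda>(g,h) (g',h'). adj G g g' \<and> adj H h h')"

end

theory Submission
  imports Defs
begin

lemma key_arith:
  fixes g :: "nat \<Rightarrow> nat \<Rightarrow> 'b \<Rightarrow> nat"
  assumes p: "p > 1"
  shows "(\<exists>K. \<forall>k<a. \<forall>i<p. \<forall>x\<in>V. (\<Sum>j\<in>{0..<p}-{i}. g k j x) = K)
     \<longleftrightarrow> (\<exists>K. \<forall>k<a. \<forall>j<p. \<forall>x\<in>V. g k j x = K)"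
proof
  assume "\<exists>K. \<forall>k<a. \<forall>i<p. \<forall>x\<in>V. (\<Sum>j\<in>{0..<p}-{i}. g k j x) = K"
  then obtain K where K: "\<And>k i x. k < a \<Longrightarrow> i < p \<Longrightarrow> x \<in> V \<Longrightarrow> (\<Sum>j\<in>{0..<p}-{i}. g k j x) = K"
    by blast
  have "g k j x = K div (p - 1)" if "k < a" "j < p" "x \<in> V" for k j x
  proof -
    define S where "S = (\<Sum>j\<in>{0..<p}. g k j x)"
    have S: "S = g k i x + K" if "i < p" for i
      using K[OF \<open>k<a\<close> that \<open>x\<in>V\<close>] that unfolding S_def
      by (simp add: sum.remove[of "{0..<p}" i])
    have eq: "g k i x = g k j x" if "i < p" for i
      using S[OF that] S[OF \<open>j<p\<close>] by simp
    have "S = (\<Sum>i\<in>{0..<p}. g k j x)" unfolding S_def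
      by (rule sum.cong) (auto simp: eq)
    then have "S = p * g k j x" by simp
    with S[OF \<open>j<p\<close>] have "p * g k j x = g k j x + K" by simp
    then have h: "(p - 1) * g k j x = K" by (simp add: diff_mult_distrib)
    show ?thesis using p by (simp add: h[symmetric])
  qed
  then show "\<exists>K. \<forall>k<a. \<forall>j<p. \<forall>x\<in>V. g k j x = K" by blast
next
  assume "\<exists>K. \<forall>k<a. \<forall>j<p. \<forall>x\<in>V. g k j x = K"
  then obtain K where K: "\<And>k j x. k < a \<Longrightarrow> j < p \<Longrightarrow> x \<in> V \<Longrightarrow> g k j x = K" by blast
  have "(\<Sum>j\<in>{0..<p}-{i}. g k j x) = (p - 1) * K" if "k < a" "i < p" "x \<in> V" for k i x
  proof -
    have "(\<Sum>j\<in>{0..<p}-{i}. g k j x) = (\<Sum>j\<in>{0..<p}-{i}. K)"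
      by (rule sum.cong) (auto simp: K that)
    also have "\<dots> = (p - 1) * K" using that by simp
    finally show ?thesis .
  qed
  then show "\<exists>K. \<forall>k<a. \<forall>i<p. \<forall>x\<in>V. (\<Sum>j\<in>{0..<p}-{i}. g k j x) = K" by blast
qed

lemma nbhd_L:
  assumes "c < a * p"
  shows "nbhd (lex_prod (copies (a*p) G) (empty_graph n)) ((c,x),u) = ({c} \<times> nbhd G x) \<times> {0..<n}"
  using assms by (auto simp: nbhd_def lex_prod_def copies_def empty_graph_def verts_def adj_def)

lemma nbhd_R:
  assumes "k < a"
  shows "nbhd (tensor_prod (copies a (complete_multipartite n p)) G) ((k,(i,u)),x)
     = ({k} \<times> (({0..<p}-{i}) \<times> {0..<n})) \<times> nbhd G x"
  using assms by (auto simp: nbhd_def tensor_prod_def copies_def complete_multipartite_def verts_def adj_def)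

lemma sum_times: "sum f (A \<times> B) = (\<Sum>a\<in>A. \<Sum>b\<in>B. f (a,b))"
  by (subst sum.cartesian_product) simp

lemma sum_L:
  shows "(\<Sum>z\<in>({c} \<times> N) \<times> {0..<n}. f z) = (\<Sum>y\<in>N. \<Sum>v\<in>{0..<n}. f ((c,y),v))"
  by (simp add: sum_times lessThan_atLeast0)

lemma sum_R:
  shows "(\<Sum>z\<in>({k} \<times> (A \<times> {0..<n})) \<times> N. f z)
       = (\<Sum>j\<in>A. \<Sum>v\<in>{0..<n}. \<Sum>y\<in>N. f ((k,(j,v)),y))"
  by (simp add: sum_times lessThan_atLeast0)

lemma idx_less: "k < (a::nat) \<Longrightarrow> j < p \<Longrightarrow> k*p+j < a*p"
proof -
  assume "k < a" "j < p"
  then have "k*p + j < k*p + p" by simp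
  also have "\<dots> = Suc k * p" by simp
  also have "\<dots> \<le> a * p" using \<open>k<a\<close> by (intro mult_le_mono1) simp
  finally show ?thesis .
qed

theorem theorem16:
  fixes a n p :: nat and G :: "'a graph"
  assumes "a \<ge> 1" and "n > 1" and "p > 1"
    and "simple_graph G" and "regular G"
  shows "distance_magic (lex_prod (copies (a * p) G) (empty_graph n))
     \<longleftrightarrow> distance_magic (tensor_prod (copies a (complete_multipartite n p)) G)"
proof -
  define L where "L = lex_prod (copies (a * p) G) (empty_graph n)"
  define R where "R = tensor_prod (copies a (complete_multipartite n p)) G"
  define V where "V = verts G"
  have p0: "p > 0" and n0: "n > 0" using assms by auto
  have finV: "finite V" using assms(4) unfolding simple_graph_def V_def by simp
  define \<phi> :: "((nat \<times> (nat \<times> nat)) \<times> 'a) \<Rightarrow> ((nat \<times> 'a) \<times> nat)"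
    where "\<phi> = (\<lambda>((k,(i,u)),x). ((k*p+i,x),u))"
  define \<psi> :: "((nat \<times> 'a) \<times> nat) \<Rightarrow> ((nat \<times> (nat \<times> nat)) \<times> 'a)"
    where "\<psi> = (\<lambda>((c,x),u). ((c div p,(c mod p,u)),x))"
  have vL: "verts L = ({0..<a*p} \<times> V) \<times> {0..<n}"
    unfolding L_def V_def by (simp add: lex_prod_def copies_def empty_graph_def verts_def)
  have vR: "verts R = ({0..<a} \<times> ({0..<p} \<times> {0..<n})) \<times> V"
    unfolding R_def V_def by (simp add: tensor_prod_def copies_def complete_multipartite_def verts_def)
  have bij: "bij_betw \<phi> (verts R) (verts L)"
  proof (rule bij_betw_byWitness[where f'=\<psi>])
    show "\<forall>z\<in>verts R. \<psi> (\<phi> z) = z" unfolding vR \<phi>_def \<psi>_def by auto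
    show "\<forall>w\<in>verts L. \<phi> (\<psi> w) = w" unfolding vL \<phi>_def \<psi>_def by auto
    show "\<phi> ` verts R \<subseteq> verts L" unfolding vR vL \<phi>_def by (auto simp: idx_less)
    show "\<psi> ` verts L \<subseteq> verts R" unfolding vR vL \<psi>_def using p0
      by (auto simp: less_mult_imp_div_less)
  qed
  have bij2: "bij_betw \<psi> (verts L) (verts R)"
  proof (rule bij_betw_byWitness[where f'=\<phi>])
    show "\<forall>z\<in>verts R. \<psi> (\<phi> z) = z" unfolding vR \<phi>_def \<psi>_def by auto
    show "\<forall>w\<in>verts L. \<phi> (\<psi> w) = w" unfolding vL \<phi>_def \<psi>_def by auto
    show "\<phi> ` verts R \<subseteq> verts L" unfolding vR vL \<phi>_def by (auto simp: idx_less)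
    show "\<psi> ` verts L \<subseteq> verts R" unfolding vR vL \<psi>_def using p0
      by (auto simp: less_mult_imp_div_less)
  qed
  have cardeq: "card (verts R) = card (verts L)" using bij by (rule bij_betw_same_card)
  have main: "(\<exists>K. \<forall>w\<in>verts L. sum f (nbhd L w) = K)
      \<longleftrightarrow> (\<exists>K. \<forall>z\<in>verts R. sum (f \<circ> \<phi>) (nbhd R z) = K)" for f :: "(nat \<times> 'a) \<times> nat \<Rightarrow> nat"
  proof -
    define g where "g k j x = (\<Sum>y\<in>nbhd G x. \<Sum>v\<in>{0..<n}. f ((k*p+j,y),v))" for k j x
    have sL: "sum f (nbhd L ((c,x),u)) = g (c div p) (c mod p) x" if "c < a*p" for c x u
      using that unfolding L_def g_def by (simp add: nbhd_L sum_L)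
    have sR: "sum (f \<circ> \<phi>) (nbhd R ((k,(i,u)),x)) = (\<Sum>j\<in>{0..<p}-{i}. g k j x)"
      if "k < a" for k i u x
    proof -
      have "sum (f \<circ> \<phi>) (nbhd R ((k,(i,u)),x))
          = (\<Sum>j\<in>{0..<p}-{i}. \<Sum>v\<in>{0..<n}. \<Sum>y\<in>nbhd G x. f ((k*p+j,y),v))"
        using that unfolding R_def by (simp add: nbhd_R sum_R \<phi>_def)
      also have "\<dots> = (\<Sum>j\<in>{0..<p}-{i}. g k j x)"
        unfolding g_def by (rule sum.cong[OF refl], rule sum.swap)
      finally show ?thesis .
    qed
    have eL: "(\<forall>w\<in>verts L. sum f (nbhd L w) = K) \<longleftrightarrow> (\<forall>k<a. \<forall>j<p. \<forall>x\<in>V. g k j x = K)" for K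
    proof
      assume H: "\<forall>w\<in>verts L. sum f (nbhd L w) = K"
      show "\<forall>k<a. \<forall>j<p. \<forall>x\<in>V. g k j x = K"
      proof (intro allI impI ballI)
        fix k j x assume "k < a" "j < p" "x \<in> V"
        then have "((k*p+j,x),0) \<in> verts L" using n0 by (simp add: vL idx_less)
        with H have "sum f (nbhd L ((k*p+j,x),0)) = K" by blast
        then show "g k j x = K" using sL[of "k*p+j" x 0] idx_less[OF \<open>k<a\<close> \<open>j<p\<close>] \<open>j<p\<close> by simp
      qed
    next
      assume H: "\<forall>k<a. \<forall>j<p. \<forall>x\<in>V. g k j x = K"
      show "\<forall>w\<in>verts L. sum f (nbhd L w) = K"
      proof
        fix w assume "w \<in> verts L"
        then obtain c x u where w: "w = ((c,x),u)" "c < a*p" "x \<in> V" by (auto simp: vL)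
        have "c div p < a" using w(2) p0 by (simp add: less_mult_imp_div_less)
        moreover have "c mod p < p" using p0 by simp
        ultimately show "sum f (nbhd L w) = K" using H sL[OF w(2)] w by simp
      qed
    qed
    have eR: "(\<forall>z\<in>verts R. sum (f \<circ> \<phi>) (nbhd R z) = K) \<longleftrightarrow>
        (\<forall>k<a. \<forall>i<p. \<forall>x\<in>V. (\<Sum>j\<in>{0..<p}-{i}. g k j x) = K)" for K
    proof
      assume H: "\<forall>z\<in>verts R. sum (f \<circ> \<phi>) (nbhd R z) = K"
      show "\<forall>k<a. \<forall>i<p. \<forall>x\<in>V. (\<Sum>j\<in>{0..<p}-{i}. g k j x) = K"
      proof (intro allI impI ballI)
        fix k i x assume "k < a" "i < p" "x \<in> V"
        then have "((k,(i,0)),x) \<in> verts R" using n0 by (simp add: vR)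
        with H have "sum (f \<circ> \<phi>) (nbhd R ((k,(i,0)),x)) = K" by blast
        then show "(\<Sum>j\<in>{0..<p}-{i}. g k j x) = K" using sR[OF \<open>k<a\<close>] by simp
      qed
    next
      assume H: "\<forall>k<a. \<forall>i<p. \<forall>x\<in>V. (\<Sum>j\<in>{0..<p}-{i}. g k j x) = K"
      show "\<forall>z\<in>verts R. sum (f \<circ> \<phi>) (nbhd R z) = K"
      proof
        fix z assume "z \<in> verts R"
        then obtain k i u x where z: "z = ((k,(i,u)),x)" "k < a" "i < p" "x \<in> V" by (auto simp: vR)
        show "sum (f \<circ> \<phi>) (nbhd R z) = K" using H sR[OF z(2)] z by simp
      qed
    qed
    show ?thesis unfolding eL eR by (rule key_arith[OF assms(3), where a=a and V=V and g=g, symmetric])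
  qed
  show ?thesis
    unfolding L_def[symmetric] R_def[symmetric]
  proof
    assume "distance_magic L"
    then obtain f K where f: "bij_betw f (verts L) {1..card (verts L)}"
      "\<forall>x\<in>verts L. sum f (nbhd L x) = K" unfolding distance_magic_def by blast
    have "bij_betw (f \<circ> \<phi>) (verts R) {1..card (verts R)}"
      unfolding cardeq using bij f(1) by (rule bij_betw_trans)
    moreover obtain K' where "\<forall>z\<in>verts R. sum (f \<circ> \<phi>) (nbhd R z) = K'"
      using main[of f] f(2) by blast
    ultimately show "distance_magic R" unfolding distance_magic_def by blast
  next
    assume "distance_magic R"
    then obtain h K where h: "bij_betw h (verts R) {1..card (verts R)}"
      "\<forall>x\<in>verts R. sum h (nbhd R x) = K" unfolding distance_magic_def by blast
    define f where "f = h \<circ> \<psi>"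
    have "bij_betw f (verts L) {1..card (verts L)}"
      unfolding f_def cardeq[symmetric] using bij2 h(1) by (rule bij_betw_trans)
    moreover have "\<forall>z\<in>verts R. sum (f \<circ> \<phi>) (nbhd R z) = K"
    proof
      fix z assume "z \<in> verts R"
      have "sum (f \<circ> \<phi>) (nbhd R z) = sum h (nbhd R z)"
      proof (rule sum.cong[OF refl])
        fix y assume "y \<in> nbhd R z"
        then have "y \<in> verts R" by (simp add: nbhd_def)
        then show "(f \<circ> \<phi>) y = h y" unfolding f_def vR \<phi>_def \<psi>_def by auto
      qed
      then show "sum (f \<circ> \<phi>) (nbhd R z) = K" using h(2) \<open>z \<in> verts R\<close> by simp
    qed
    then obtain K' where "\<forall>w\<in>verts L. sum f (nbhd L w) = K'" using main[of f] by blast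
    ultimately show "distance_magic L" unfolding distance_magic_def by blast
  qed
qed

end
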